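(* Let $n\geq1$. The submonoid $\Sigma_n$ of $\mathcal{B}_{n+1}$ is an Ore monoid, and its group of fractions is isomorphic to $\mathcal{B}_{n+1}$ (via the map induced by the inclusion $\Sigma_n\subseteq\mathcal{B}_{n+1}$).
   Context: $\mathcal{B}_{n+1}$ is the braid group on $n+1$ strands with standard Artin generators $\sigma_1,\dots,\sigma_n$; $\Sigma_n$ is its submonoid generated by $\sigma_1,\ \sigma_1\sigma_2,\ \dots,\ \sigma_1\sigma_2\cdots\sigma_n$. An Ore monoid is a monoid that is left- and right-cancellative and in which any two elements admit a common left-multiple (an element $a'a=b'b$). *)

theory Defs
  imports "HOL-Algebra.Algebra"
begin

text \<open>A letter (i, True) stands for sigma_i, (i, False) for sigma_i inverse,
  with 1 <= i < m.\<close>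

definition braid_letters :: "nat \<Rightarrow> (nat \<times> bool) set" where
  "braid_letters m = {(i, b). 1 \<le> i \<and> i < m}"

definition braid_words :: "nat \<Rightarrow> (nat \<times> bool) list set" where
  "braid_words m = {w. set w \<subseteq> braid_letters m}"

inductive braid_eqv :: "nat \<Rightarrow> (nat \<times> bool) list \<Rightarrow> (nat \<times> bool) list \<Rightarrow> bool"
  for m :: nat where
  refl: "w \<in> braid_words m \<Longrightarrow> braid_eqv m w w"
| sym: "braid_eqv m u v \<Longrightarrow> braid_eqv m v u"
| trans: "braid_eqv m u v \<Longrightarrow> braid_eqv m v w \<Longrightarrow> braid_eqv m u w"
| cong: "braid_eqv m u u' \<Longrightarrow> braid_eqv m v v' \<Longrightarrow> braid_eqv m (u @ v) (u' @ v')"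
| cancel: "1 \<le> i \<Longrightarrow> i < m \<Longrightarrow> braid_eqv m [(i, b), (i, \<not> b)] []"
| far_comm: "1 \<le> i \<Longrightarrow> i + 2 \<le> j \<Longrightarrow> j < m \<Longrightarrow>
      braid_eqv m [(i, True), (j, True)] [(j, True), (i, True)]"
| braid_rel: "1 \<le> i \<Longrightarrow> i + 1 < m \<Longrightarrow>
      braid_eqv m [(i, True), (Suc i, True), (i, True)] [(Suc i, True), (i, True), (Suc i, True)]"

definition braid_class :: "nat \<Rightarrow> (nat \<times> bool) list \<Rightarrow> (nat \<times> bool) list set" where
  "braid_class m w = {v. braid_eqv m w v}"

definition braid_mult :: "nat \<Rightarrow> (nat \<times> bool) list set \<Rightarrow> (nat \<times> bool) list set \<Rightarrow> (nat \<times> bool) list set" where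
  "braid_mult m A B = {w. \<exists>u\<in>A. \<exists>v\<in>B. braid_eqv m (u @ v) w}"

definition braid_group :: "nat \<Rightarrow> (nat \<times> bool) list set monoid" where
  "braid_group m =
     \<lparr> carrier = braid_class m ` braid_words m,
       monoid.mult = braid_mult m,
       one = braid_class m [] \<rparr>"

definition braid_sigma :: "nat \<Rightarrow> nat \<Rightarrow> (nat \<times> bool) list set" where
  "braid_sigma m i = braid_class m [(i, True)]"

definition braid_delta :: "nat \<Rightarrow> nat \<Rightarrow> (nat \<times> bool) list set" where
  "braid_delta m k = braid_class m (map (\<lambda>i. (i, True)) [1..<Suc k])"

definition submonoid_generated :: "('a, 'b) monoid_scheme \<Rightarrow> 'a set \<Rightarrow> 'a set" where
  "submonoid_generated G S = \<Inter> {M. submonoid M G \<and> S \<subseteq> M}"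

definition Sigma_monoid :: "nat \<Rightarrow> (nat \<times> bool) list set monoid" where
  "Sigma_monoid n = (braid_group (Suc n))
     \<lparr> carrier := submonoid_generated (braid_group (Suc n)) (braid_delta (Suc n) ` {1..n}) \<rparr>"

definition ore_monoid :: "('a, 'b) monoid_scheme \<Rightarrow> bool" where
  "ore_monoid M \<longleftrightarrow> monoid M
     \<and> (\<forall>a\<in>carrier M. \<forall>b\<in>carrier M. \<forall>c\<in>carrier M. a \<otimes>\<^bsub>M\<^esub> b = a \<otimes>\<^bsub>M\<^esub> c \<longrightarrow> b = c)
     \<and> (\<forall>a\<in>carrier M. \<forall>b\<in>carrier M. \<forall>c\<in>carrier M. b \<otimes>\<^bsub>M\<^esub> a = c \<otimes>\<^bsub>M\<^esub> a \<longrightarrow> b = c)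
     \<and> (\<forall>a\<in>carrier M. \<forall>b\<in>carrier M. \<exists>a'\<in>carrier M. \<exists>b'\<in>carrier M.
          a' \<otimes>\<^bsub>M\<^esub> a = b' \<otimes>\<^bsub>M\<^esub> b)"

text \<open>For an Ore monoid M: G is (isomorphic, via the map induced by f, to) the group of
  fractions of M, i.e. f is an injective monoid homomorphism into the group G and every
  element of G has the form f(a)^-1 f(b) with a, b in M.\<close>
definition group_of_fractions_via ::
    "('a, 'c) monoid_scheme \<Rightarrow> ('b, 'd) monoid_scheme \<Rightarrow> ('a \<Rightarrow> 'b) \<Rightarrow> bool" where
  "group_of_fractions_via M G f \<longleftrightarrow> monoid M \<and> group G
     \<and> f \<in> hom M G \<and> f \<one>\<^bsub>M\<^esub> = \<one>\<^bsub>G\<^esub> \<and> inj_on f (carrier M)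
     \<and> (\<forall>g\<in>carrier G. \<exists>a\<in>carrier M. \<exists>b\<in>carrier M.
          g = inv\<^bsub>G\<^esub> (f a) \<otimes>\<^bsub>G\<^esub> f b)"

end

theory Submission
  imports Defs
begin


lemma eqv_words: "braid_eqv m u v \<Longrightarrow> u \<in> braid_words m \<and> v \<in> braid_words m"
  by (induction rule: braid_eqv.induct) (auto simp: braid_words_def braid_letters_def)

lemma class_eq: "braid_eqv m u v \<Longrightarrow> braid_class m u = braid_class m v"
  unfolding braid_class_def using braid_eqv.trans braid_eqv.sym by blast

lemma in_class: "w \<in> braid_words m \<Longrightarrow> w \<in> braid_class m w"
  by (simp add: braid_class_def braid_eqv.refl)

lemma class_eq_iff: "u \<in> braid_words m \<Longrightarrow> braid_class m u = braid_class m v \<longleftrightarrow> braid_eqv m u v"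
proof
  assume "u \<in> braid_words m" "braid_class m u = braid_class m v"
  then have "u \<in> braid_class m v" using in_class by metis
  then show "braid_eqv m u v" by (simp add: braid_class_def braid_eqv.sym)
qed (rule class_eq)

lemma mult_class:
  assumes "u \<in> braid_words m" "v \<in> braid_words m"
  shows "braid_mult m (braid_class m u) (braid_class m v) = braid_class m (u @ v)"
proof
  show "braid_mult m (braid_class m u) (braid_class m v) \<subseteq> braid_class m (u @ v)"
    unfolding braid_mult_def braid_class_def
    using braid_eqv.cong braid_eqv.trans by blast
  show "braid_class m (u @ v) \<subseteq> braid_mult m (braid_class m u) (braid_class m v)"
    unfolding braid_mult_def using in_class[OF assms(1)] in_class[OF assms(2)]
    by (auto simp: braid_class_def)
qed

lemma words_append[simp]: "u @ v \<in> braid_words m \<longleftrightarrow> u \<in> braid_words m \<and> v \<in> braid_words m"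
  by (auto simp: braid_words_def)

definition winv :: "(nat \<times> bool) list \<Rightarrow> (nat \<times> bool) list" where
  "winv w = rev (map (\<lambda>(i,b). (i, \<not> b)) w)"

lemma winv_words: "w \<in> braid_words m \<Longrightarrow> winv w \<in> braid_words m"
  by (auto simp: winv_def braid_words_def braid_letters_def)

lemma winv_winv[simp]: "winv (winv w) = w"
  by (induction w) (auto simp: winv_def)

lemma winv_cancel: "w \<in> braid_words m \<Longrightarrow> braid_eqv m (w @ winv w) []"
proof (induction w)
  case Nil then show ?case by (simp add: braid_eqv.refl braid_words_def winv_def)
next
  case (Cons x w)
  obtain i b where x: "x = (i,b)" by (cases x)
  have xw: "[x] \<in> braid_words m" "w \<in> braid_words m" and il: "1 \<le> i" "i < m"
    using Cons.prems x by (auto simp: braid_words_def braid_letters_def)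
  have e: "(x # w) @ winv (x # w) = [x] @ ((w @ winv w) @ [(i, \<not> b)])"
    by (simp add: winv_def x)
  have "braid_eqv m ([x] @ ((w @ winv w) @ [(i, \<not> b)])) ([x] @ ([] @ [(i, \<not> b)]))"
    apply (rule braid_eqv.cong, rule braid_eqv.refl[OF xw(1)])
    apply (rule braid_eqv.cong, rule Cons.IH[OF xw(2)])
    apply (rule braid_eqv.refl) using il by (auto simp: braid_words_def braid_letters_def)
  moreover have "braid_eqv m ([x] @ ([] @ [(i, \<not> b)])) []"
    using braid_eqv.cancel[OF il, of b] by (simp add: x)
  ultimately show ?case using e braid_eqv.trans by metis
qed

lemma braid_group: "group (braid_group m)"
proof (rule groupI)
  fix x y assume "x \<in> carrier (braid_group m)" "y \<in> carrier (braid_group m)"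
  then show "x \<otimes>\<^bsub>braid_group m\<^esub> y \<in> carrier (braid_group m)"
    by (auto simp: braid_group_def mult_class)
next
  show "\<one>\<^bsub>braid_group m\<^esub> \<in> carrier (braid_group m)"
    by (auto simp: braid_group_def braid_words_def)
next
  fix x y z assume "x \<in> carrier (braid_group m)" "y \<in> carrier (braid_group m)" "z \<in> carrier (braid_group m)"
  then show "x \<otimes>\<^bsub>braid_group m\<^esub> y \<otimes>\<^bsub>braid_group m\<^esub> z = x \<otimes>\<^bsub>braid_group m\<^esub> (y \<otimes>\<^bsub>braid_group m\<^esub> z)"
    by (auto simp: braid_group_def mult_class)
next
  fix x assume "x \<in> carrier (braid_group m)"
  then show "\<one>\<^bsub>braid_group m\<^esub> \<otimes>\<^bsub>braid_group m\<^esub> x = x"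
    by (auto simp: braid_group_def mult_class braid_words_def)
next
  fix x assume "x \<in> carrier (braid_group m)"
  then obtain w where w: "w \<in> braid_words m" "x = braid_class m w" by (auto simp: braid_group_def)
  have "braid_eqv m (winv w @ w) []" using winv_cancel[OF winv_words[OF w(1)]] by simp
  then show "\<exists>y\<in>carrier (braid_group m). y \<otimes>\<^bsub>braid_group m\<^esub> x = \<one>\<^bsub>braid_group m\<^esub>"
    using w winv_words[OF w(1)]
    by (auto simp: braid_group_def mult_class intro!: bexI[of _ "braid_class m (winv w)"] class_eq)
qed



primrec ep :: "nat \<Rightarrow> nat \<Rightarrow> (nat \<times> bool) list set" where
  "ep m 0 = braid_class m []"
| "ep m (Suc k) = braid_mult m (ep m k) (braid_sigma m (k+2))"

locale braidn = group G for G :: "(nat \<times> bool) list set monoid" (structure) +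
  fixes n :: nat
  assumes G_def: "G = braid_group (Suc n)" and n1: "1 \<le> n"
begin

abbreviation "s i \<equiv> braid_sigma (Suc n) i"
abbreviation "d k \<equiv> braid_delta (Suc n) k"
abbreviation "e k \<equiv> ep (Suc n) k"

lemma carrier_G: "carrier G = braid_class (Suc n) ` braid_words (Suc n)"
  by (simp add: G_def braid_group_def)
lemma mult_G: "x \<otimes> y = braid_mult (Suc n) x y"
  by (simp add: G_def braid_group_def)
lemma one_G: "\<one> = braid_class (Suc n) []"
  by (simp add: G_def braid_group_def)

lemma letter_word: "1 \<le> i \<Longrightarrow> i \<le> n \<Longrightarrow> [(i,b)] \<in> braid_words (Suc n)"
  by (auto simp: braid_words_def braid_letters_def)

lemma s_closed[simp]: "1 \<le> i \<Longrightarrow> i \<le> n \<Longrightarrow> s i \<in> carrier G"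
  using letter_word by (auto simp: carrier_G braid_sigma_def)

lemma class_app: "u \<in> braid_words (Suc n) \<Longrightarrow> v \<in> braid_words (Suc n) \<Longrightarrow>
   braid_class (Suc n) (u @ v) = braid_class (Suc n) u \<otimes> braid_class (Suc n) v"
  by (simp add: mult_G mult_class)

lemma class_closed: "u \<in> braid_words (Suc n) \<Longrightarrow> braid_class (Suc n) u \<in> carrier G"
  by (simp add: carrier_G)

lemma neg_letter: assumes "1 \<le> i" "i \<le> n"
  shows "braid_class (Suc n) [(i,False)] = inv (s i)"
proof -
  have "braid_class (Suc n) [(i,False)] \<otimes> s i = \<one>"
    unfolding braid_sigma_def one_G
    using class_app[OF letter_word[OF assms] letter_word[OF assms]]
      class_eq[OF braid_eqv.cancel[of i "Suc n" False]] assms by simp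
  then show ?thesis using inv_equality assms letter_word class_closed by auto
qed

lemma class_induct:
  assumes w: "w \<in> braid_words (Suc n)"
    and one: "P \<one>"
    and pos: "\<And>i x. 1 \<le> i \<Longrightarrow> i \<le> n \<Longrightarrow> x \<in> carrier G \<Longrightarrow> P x \<Longrightarrow> P (s i \<otimes> x)"
    and neg: "\<And>i x. 1 \<le> i \<Longrightarrow> i \<le> n \<Longrightarrow> x \<in> carrier G \<Longrightarrow> P x \<Longrightarrow> P (inv (s i) \<otimes> x)"
  shows "P (braid_class (Suc n) w)"
  using w
proof (induction w)
  case Nil then show ?case using one one_G by simp
next
  case (Cons x w)
  obtain i b where x: "x = (i,b)" by (cases x)
  have il: "1 \<le> i" "i \<le> n" and ww: "w \<in> braid_words (Suc n)"
    using Cons.prems x by (auto simp: braid_words_def braid_letters_def)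
  have eq: "braid_class (Suc n) (x # w) = braid_class (Suc n) [(i,b)] \<otimes> braid_class (Suc n) w"
    using class_app[OF letter_word[OF il] ww] x by simp
  show ?case
  proof (cases b)
    case True then show ?thesis using eq pos[OF il class_closed[OF ww] Cons.IH[OF ww]]
      by (simp add: braid_sigma_def)
  next
    case False then show ?thesis using eq neg[OF il class_closed[OF ww] Cons.IH[OF ww]] neg_letter[OF il]
      by simp
  qed
qed

lemma far: assumes "1 \<le> i" "i + 2 \<le> j" "j \<le> n"
  shows "s i \<otimes> s j = s j \<otimes> s i"
proof -
  have w: "[(i,True)] \<in> braid_words (Suc n)" "[(j,True)] \<in> braid_words (Suc n)"
    using assms letter_word by auto
  show ?thesis unfolding braid_sigma_def
    using class_app[OF w(1) w(2)] class_app[OF w(2) w(1)]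
      class_eq[OF braid_eqv.far_comm[of i j "Suc n"]] assms by simp
qed

lemma far': assumes "1 \<le> i" "1 \<le> j" "i \<le> n" "j \<le> n" "i + 2 \<le> j \<or> j + 2 \<le> i"
  shows "s i \<otimes> s j = s j \<otimes> s i"
  using assms far by (metis le_trans)

lemma braid: assumes "1 \<le> i" "i + 1 \<le> n"
  shows "s i \<otimes> s (Suc i) \<otimes> s i = s (Suc i) \<otimes> s i \<otimes> s (Suc i)"
proof -
  have w: "[(i,True)] \<in> braid_words (Suc n)" "[(Suc i,True)] \<in> braid_words (Suc n)"
    using assms letter_word by auto
  define a where "a = [(i,True)]"
  define b where "b = [(Suc i,True)]"
  have wa: "a \<in> braid_words (Suc n)" and wb: "b \<in> braid_words (Suc n)" using w a_def b_def by auto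
  have "braid_class (Suc n) (a @ b @ a) = braid_class (Suc n) (b @ a @ b)"
    using class_eq[OF braid_eqv.braid_rel[of i "Suc n"]] assms by (simp add: a_def b_def)
  moreover have "braid_class (Suc n) (a @ b @ a) = s i \<otimes> s (Suc i) \<otimes> s i"
    using wa wb by (simp add: class_app m_assoc class_closed a_def[symmetric] b_def[symmetric] braid_sigma_def del: append.simps)
  moreover have "braid_class (Suc n) (b @ a @ b) = s (Suc i) \<otimes> s i \<otimes> s (Suc i)"
    using wa wb by (simp add: class_app m_assoc class_closed a_def[symmetric] b_def[symmetric] braid_sigma_def del: append.simps)
  ultimately show ?thesis by simp
qed

lemma d0: "d 0 = \<one>"
  by (simp add: braid_delta_def one_G)

lemma dSuc: "Suc k \<le> n \<Longrightarrow> d (Suc k) = d k \<otimes> s (Suc k)"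
proof -
  assume k: "Suc k \<le> n"
  have w: "map (\<lambda>i. (i, True)) [1..<Suc k] \<in> braid_words (Suc n)"
    using k by (auto simp: braid_words_def braid_letters_def)
  show ?thesis unfolding braid_delta_def braid_sigma_def
    using class_app[OF w letter_word[of "Suc k" True]] k by simp
qed

lemma d_closed[simp]: "k \<le> n \<Longrightarrow> d k \<in> carrier G"
  by (induction k) (auto simp: d0 dSuc)

lemma e0: "e 0 = \<one>" by (simp add: one_G)
lemma eSuc: "e (Suc k) = e k \<otimes> s (k+2)" by (simp add: mult_G)
lemma e_closed[simp]: "k + 1 \<le> n \<Longrightarrow> e k \<in> carrier G"
  by (induction k) (auto simp: one_G[symmetric] mult_G[symmetric])

declare ep.simps[simp del]

end


context braidn begin

lemma comm_d: "j \<le> n \<Longrightarrow> k + 2 \<le> j \<Longrightarrow> s j \<otimes> d k = d k \<otimes> s j"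
proof (induction k)
  case 0 then show ?case by (simp add: d0)
next
  case (Suc k)
  have "s j \<otimes> d (Suc k) = (s j \<otimes> d k) \<otimes> s (Suc k)"
    using Suc.prems by (simp add: dSuc m_assoc)
  also have "\<dots> = d k \<otimes> (s j \<otimes> s (Suc k))" using Suc by (simp add: m_assoc)
  also have "\<dots> = d k \<otimes> (s (Suc k) \<otimes> s j)" using Suc.prems far[of "Suc k" j] by simp
  also have "\<dots> = d (Suc k) \<otimes> s j" using Suc.prems by (simp add: dSuc m_assoc)
  finally show ?case .
qed

lemma d_shift: "1 \<le> i \<Longrightarrow> i < k \<Longrightarrow> k \<le> n \<Longrightarrow> d k \<otimes> s i = s (Suc i) \<otimes> d k"
proof (induction k)
  case 0 then show ?case by simp
next
  case (Suc k)
  show ?case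
  proof (cases "k = i")
    case True
    obtain p where p: "i = Suc p" using Suc.prems by (cases i) auto
    have "d (Suc k) \<otimes> s i = d p \<otimes> (s i \<otimes> s (Suc i) \<otimes> s i)"
      using Suc.prems True p by (simp add: dSuc m_assoc)
    also have "\<dots> = d p \<otimes> (s (Suc i) \<otimes> s i \<otimes> s (Suc i))"
      using braid[of i] Suc.prems True by simp
    also have "\<dots> = (d p \<otimes> s (Suc i)) \<otimes> (s i \<otimes> s (Suc i))"
      using Suc.prems True p by (simp add: m_assoc)
    also have "\<dots> = (s (Suc i) \<otimes> d p) \<otimes> (s i \<otimes> s (Suc i))"
      using comm_d[of "Suc i" p] Suc.prems True p by simp
    also have "\<dots> = s (Suc i) \<otimes> d (Suc k)"
      using Suc.prems True p by (simp add: dSuc m_assoc)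
    finally show ?thesis .
  next
    case False
    then have ik: "i < k" using Suc.prems by simp
    have "d (Suc k) \<otimes> s i = d k \<otimes> (s (Suc k) \<otimes> s i)"
      using Suc.prems by (simp add: dSuc m_assoc)
    also have "\<dots> = d k \<otimes> (s i \<otimes> s (Suc k))"
      using far[of i "Suc k"] Suc.prems ik by simp
    also have "\<dots> = (d k \<otimes> s i) \<otimes> s (Suc k)"
      using Suc.prems by (simp add: m_assoc)
    also have "\<dots> = (s (Suc i) \<otimes> d k) \<otimes> s (Suc k)"
      using Suc.IH Suc.prems ik by simp
    also have "\<dots> = s (Suc i) \<otimes> d (Suc k)"
      using Suc.prems ik by (simp add: dSuc m_assoc)
    finally show ?thesis .
  qed
qed

lemma dn_dk: "k < n \<Longrightarrow> d n \<otimes> d k = e k \<otimes> d n"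
proof (induction k)
  case 0 then show ?case by (simp add: d0 e0)
next
  case (Suc k)
  have "d n \<otimes> d (Suc k) = (d n \<otimes> d k) \<otimes> s (Suc k)"
    using Suc.prems by (simp add: dSuc m_assoc)
  also have "\<dots> = e k \<otimes> (d n \<otimes> s (Suc k))"
    using Suc by (simp add: m_assoc)
  also have "\<dots> = e k \<otimes> (s (k+2) \<otimes> d n)"
    using d_shift[of "Suc k" n] Suc.prems by simp
  also have "\<dots> = e (Suc k) \<otimes> d n"
    using Suc.prems by (simp add: eSuc m_assoc)
  finally show ?case .
qed

lemma s1_e: "k < n \<Longrightarrow> s 1 \<otimes> e k = d (Suc k)"
proof (induction k)
  case 0 then show ?case using n1 by (simp add: e0 dSuc d0)
next
  case (Suc k)
  have "s 1 \<otimes> e (Suc k) = (s 1 \<otimes> e k) \<otimes> s (k+2)"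
    using Suc.prems n1 by (simp add: eSuc m_assoc)
  also have "\<dots> = d (Suc (Suc k))" using Suc by (simp add: dSuc)
  finally show ?case .
qed

abbreviation "D \<equiv> d n"

lemma D_closed[simp]: "D \<in> carrier G" by simp

lemma DD: "s 1 \<otimes> (D \<otimes> D) = D \<otimes> D \<otimes> s n"
proof -
  obtain p where p: "n = Suc p" using n1 by (cases n) auto
  have pn: "p + 1 \<le> n" "p \<le> n" "p < n" using p by auto
  have Dp: "D = d p \<otimes> s n" using dSuc[of p] p by simp
  have "D \<otimes> D = D \<otimes> d p \<otimes> s n" 
  proof -
    have "p \<le> n" using p by simp
    then show ?thesis using n1 by (subst (2) Dp) (simp add: m_assoc)
  qed
  also have "\<dots> = e p \<otimes> D \<otimes> s n" using dn_dk[of p] p by simp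
  finally have 1: "D \<otimes> D = e p \<otimes> D \<otimes> s n" .
  have "s 1 \<otimes> (D \<otimes> D) = (s 1 \<otimes> e p) \<otimes> D \<otimes> s n"
    using 1 pn n1 by (simp add: m_assoc)
  also have "\<dots> = D \<otimes> D \<otimes> s n" using s1_e[of p] p by simp
  finally show ?thesis .
qed

lemma Dpow_shift: "1 \<le> i \<Longrightarrow> i + j \<le> n \<Longrightarrow> D [^] j \<otimes> s i = s (i + j) \<otimes> D [^] j"
proof (induction j arbitrary: i)
  case 0 then show ?case by simp
next
  case (Suc j)
  have "D [^] Suc j \<otimes> s i = D [^] j \<otimes> (D \<otimes> s i)"
    using Suc.prems by (simp add: m_assoc)
  also have "\<dots> = D [^] j \<otimes> (s (Suc i) \<otimes> D)"
    using d_shift[of i n] Suc.prems by simp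
  also have "\<dots> = (D [^] j \<otimes> s (Suc i)) \<otimes> D"
    using Suc.prems by (simp add: m_assoc)
  also have "\<dots> = s (i + Suc j) \<otimes> D [^] Suc j"
    using Suc.IH[of "Suc i"] Suc.prems by (simp add: m_assoc)
  finally show ?case .
qed

abbreviation "z \<equiv> D [^] Suc n"

lemma z_closed[simp]: "z \<in> carrier G" by simp

lemma z_s: assumes "1 \<le> i" "i \<le> n" shows "z \<otimes> s i = s i \<otimes> z"
proof -
  have zdec: "z = D [^] (i - 1) \<otimes> (D \<otimes> D) \<otimes> D [^] (n - i)"
  proof -
    have "Suc n = (i - 1) + 2 + (n - i)" using assms by simp
    then have "z = D [^] ((i - 1) + 2 + (n - i))" by (simp only:)
    also have "\<dots> = D [^] ((i - 1) + 2) \<otimes> D [^] (n - i)"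
      by (rule nat_pow_mult[symmetric, OF D_closed])
    also have "D [^] ((i - 1) + 2) = D [^] (i - 1) \<otimes> D [^] (2::nat)"
      by (rule nat_pow_mult[symmetric, OF D_closed])
    also have "D [^] (2::nat) = D \<otimes> D" by (simp add: numeral_2_eq_2)
    finally show ?thesis .
  qed
  have "z \<otimes> s i = D [^] (i - 1) \<otimes> (D \<otimes> D) \<otimes> (D [^] (n - i) \<otimes> s i)"
    using zdec assms by (simp add: m_assoc)
  also have "\<dots> = D [^] (i - 1) \<otimes> ((D \<otimes> D) \<otimes> s n) \<otimes> D [^] (n - i)"
    using Dpow_shift[of i "n - i"] assms by (simp add: m_assoc)
  also have "\<dots> = (D [^] (i - 1) \<otimes> s 1) \<otimes> (D \<otimes> D) \<otimes> D [^] (n - i)"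
    using DD assms n1 by (simp add: m_assoc)
  also have "\<dots> = s i \<otimes> z"
    using Dpow_shift[of 1 "i - 1"] assms zdec n1 by (simp add: m_assoc)
  finally show ?thesis .
qed

lemma z_central: assumes "x \<in> carrier G" shows "z \<otimes> x = x \<otimes> z"
proof -
  obtain w where w: "w \<in> braid_words (Suc n)" "x = braid_class (Suc n) w"
    using assms by (auto simp: carrier_G)
  show ?thesis unfolding w(2)
  proof (rule class_induct[OF w(1)])
    show "z \<otimes> \<one> = \<one> \<otimes> z" by simp
  next
    fix i y assume h: "1 \<le> i" "i \<le> n" "y \<in> carrier G" "z \<otimes> y = y \<otimes> z"
    have "z \<otimes> (s i \<otimes> y) = (z \<otimes> s i) \<otimes> y" using h by (simp add: m_assoc)
    also have "\<dots> = s i \<otimes> (z \<otimes> y)" using z_s h by (simp add: m_assoc)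
    finally show "z \<otimes> (s i \<otimes> y) = s i \<otimes> y \<otimes> z" using h by (simp add: m_assoc)
  next
    fix i y assume h: "1 \<le> i" "i \<le> n" "y \<in> carrier G" "z \<otimes> y = y \<otimes> z"
    have zi: "z \<otimes> inv (s i) = inv (s i) \<otimes> z"
    proof -
      have "inv (s i) \<otimes> z = inv (s i) \<otimes> z \<otimes> (s i \<otimes> inv (s i))" using h by simp
      also have "\<dots> = inv (s i) \<otimes> (z \<otimes> s i) \<otimes> inv (s i)" using h by (simp add: m_assoc)
      also have "\<dots> = z \<otimes> inv (s i)" using z_s h by (simp add: m_assoc[symmetric])
      finally show ?thesis by simp
    qed
    have "z \<otimes> (inv (s i) \<otimes> y) = (z \<otimes> inv (s i)) \<otimes> y" using h by (simp add: m_assoc)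
    also have "\<dots> = inv (s i) \<otimes> (z \<otimes> y)" using zi h by (simp add: m_assoc)
    finally show "z \<otimes> (inv (s i) \<otimes> y) = inv (s i) \<otimes> y \<otimes> z" using h by (simp add: m_assoc)
  qed
qed

end


context braidn begin

definition "Sg = submonoid_generated G (d ` {1..n})"
definition "Z = z"
lemma Z_closed[simp]: "Z \<in> carrier G" by (simp add: Z_def)
lemma Z_central: "x \<in> carrier G \<Longrightarrow> Z \<otimes> x = x \<otimes> Z" unfolding Z_def by (rule z_central)
lemma Z_D: "Z = D [^] n \<otimes> D" by (simp add: Z_def)

lemma gen_sub: "submonoid Sg G"
proof -
  have gs: "d ` {1..n} \<subseteq> carrier G" by auto
  have cs: "submonoid (carrier G) G" by (simp add: submonoid_def)
  show ?thesis unfolding Sg_def submonoid_generated_def submonoid_def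
    using cs gs by (auto simp: submonoid_def)
qed

lemma gen_incl: "1 \<le> k \<Longrightarrow> k \<le> n \<Longrightarrow> d k \<in> Sg"
  unfolding Sg_def submonoid_generated_def by auto

lemma gen_min: "submonoid T G \<Longrightarrow> d ` {1..n} \<subseteq> T \<Longrightarrow> Sg \<subseteq> T"
  unfolding Sg_def submonoid_generated_def by auto

lemma S_carrier: "x \<in> Sg \<Longrightarrow> x \<in> carrier G"
  using submonoid.subset[OF gen_sub] by auto

lemma S_one[simp]: "\<one> \<in> Sg" using submonoid.one_closed[OF gen_sub] .
lemma S_mult[simp]: "x \<in> Sg \<Longrightarrow> y \<in> Sg \<Longrightarrow> x \<otimes> y \<in> Sg"
  using submonoid.m_closed[OF gen_sub] by auto

lemma S_d: "k \<le> n \<Longrightarrow> d k \<in> Sg"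
  using gen_incl[of k] by (cases k) (auto simp: d0)

lemma S_pow: "x \<in> Sg \<Longrightarrow> x [^] (j::nat) \<in> Sg"
  by (induction j) auto

lemma zpow_central: "x \<in> carrier G \<Longrightarrow> Z [^] (j::nat) \<otimes> x = x \<otimes> Z [^] j"
proof (induction j)
  case 0 then show ?case by simp
next
  case (Suc j)
  have "Z [^] Suc j \<otimes> x = Z [^] j \<otimes> (Z \<otimes> x)" using Suc by (simp add: m_assoc)
  also have "\<dots> = Z [^] j \<otimes> (x \<otimes> Z)" using Suc Z_central by simp
  also have "\<dots> = (Z [^] j \<otimes> x) \<otimes> Z" using Suc.prems by (simp add: m_assoc)
  also have "\<dots> = x \<otimes> Z [^] Suc j" using Suc by (simp add: m_assoc)
  finally show ?case .
qed

definition "T = {x \<in> Sg. \<exists>c\<in>Sg. \<exists>j::nat. c \<otimes> x = Z [^] j}"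

lemma gens_T: "1 \<le> k \<Longrightarrow> k \<le> n \<Longrightarrow> \<exists>c\<in>Sg. \<exists>j::nat. c \<otimes> d k = Z [^] j"
proof (induction "n - k" arbitrary: k)
  case 0
  then have k: "k = n" by simp
  have "D [^] n \<otimes> D = Z [^] (1::nat)" by (simp add: Z_D)
  then show ?case using k S_d S_pow by blast
next
  case (Suc t)
  then have kn: "k < n" "Suc k \<le> n" "1 \<le> Suc k" by auto
  have tt: "t = n - Suc k" using Suc.hyps(2) by arith
  obtain c and j :: nat where c: "c \<in> Sg" "c \<otimes> d (Suc k) = Z [^] j"
    using Suc.hyps(1)[OF tt kn(3) kn(2)] by blast
  have cc: "c \<in> carrier G" using c S_carrier by auto
  have s1: "s 1 = d 1" using n1 by (simp add: dSuc d0)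
  have "(D [^] n \<otimes> c \<otimes> s 1 \<otimes> D) \<otimes> d k = D [^] n \<otimes> c \<otimes> (s 1 \<otimes> (D \<otimes> d k))"
    using cc n1 kn by (simp add: m_assoc)
  also have "\<dots> = D [^] n \<otimes> c \<otimes> (s 1 \<otimes> e k \<otimes> D)"
    using dn_dk[of k] kn cc n1 by (simp add: m_assoc)
  also have "\<dots> = D [^] n \<otimes> (c \<otimes> d (Suc k)) \<otimes> D"
    using s1_e[of k] kn cc n1 by (simp add: m_assoc)
  also have "\<dots> = D [^] n \<otimes> (Z [^] j \<otimes> D)"
    using c cc by (simp add: m_assoc)
  also have "\<dots> = Z [^] j \<otimes> (D [^] n \<otimes> D)"
    using zpow_central[of "D [^] n" j] by (simp add: m_assoc[symmetric])
  also have "\<dots> = Z [^] Suc j" by (simp add: m_assoc Z_D)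
  finally have eq: "(D [^] n \<otimes> c \<otimes> s 1 \<otimes> D) \<otimes> d k = Z [^] Suc j" .
  have "D [^] n \<otimes> c \<otimes> s 1 \<otimes> D \<in> Sg"
    using c S_pow[OF S_d[of n]] S_d[of n] gen_incl[of 1] n1 s1 by simp
  then show ?case using eq by blast
qed

lemma T_sub: "submonoid T G"
proof (unfold_locales)
  show "T \<subseteq> carrier G" using S_carrier by (auto simp: T_def)
  show "\<one> \<in> T" unfolding T_def by (rule CollectI, rule conjI, simp, rule bexI[of _ \<one>], rule exI[of _ 0]) auto
next
  fix x y assume xT: "x \<in> T" and yT: "y \<in> T"
  obtain cx j where hx: "x \<in> Sg" "cx \<in> Sg" "cx \<otimes> x = Z [^] (j::nat)" using xT unfolding T_def by blast
  obtain cy l where hy: "y \<in> Sg" "cy \<in> Sg" "cy \<otimes> y = Z [^] (l::nat)" using yT unfolding T_def by blast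
  note h = hx(1) hy(1) hx(2) hy(2) hx(3) hy(3)
  have car: "x \<in> carrier G" "y \<in> carrier G" "cx \<in> carrier G" "cy \<in> carrier G" using h S_carrier by auto
  have "(cy \<otimes> cx) \<otimes> (x \<otimes> y) = cy \<otimes> (cx \<otimes> x) \<otimes> y" using car by (simp add: m_assoc)
  also have "\<dots> = (cy \<otimes> Z [^] j) \<otimes> y" using h by simp
  also have "\<dots> = Z [^] j \<otimes> (cy \<otimes> y)" using zpow_central[of cy j] car by (simp add: m_assoc[symmetric])
  also have "\<dots> = Z [^] (j + l)" using h by (simp add: nat_pow_mult)
  finally have eq: "(cy \<otimes> cx) \<otimes> (x \<otimes> y) = Z [^] (j + l)" .
  show "x \<otimes> y \<in> T" unfolding T_def using h eq by (auto intro!: bexI[of _ "cy \<otimes> cx"])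
qed

lemma S_T: "x \<in> Sg \<Longrightarrow> \<exists>c\<in>Sg. \<exists>j::nat. c \<otimes> x = Z [^] j"
proof -
  assume x: "x \<in> Sg"
  have "d ` {1..n} \<subseteq> T" using gens_T gen_incl by (auto simp: T_def)
  then have "Sg \<subseteq> T" using gen_min[OF T_sub] by blast
  then show ?thesis using x by (auto simp: T_def)
qed

lemma ore: "a \<in> Sg \<Longrightarrow> b \<in> Sg \<Longrightarrow> \<exists>a'\<in>Sg. \<exists>b'\<in>Sg. a' \<otimes> a = b' \<otimes> b"
proof -
  assume ab: "a \<in> Sg" "b \<in> Sg"
  obtain ca j where a: "ca \<in> Sg" "ca \<otimes> a = Z [^] (j::nat)" using S_T ab by blast
  obtain cb l where b: "cb \<in> Sg" "cb \<otimes> b = Z [^] (l::nat)" using S_T ab by blast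
  have car: "a \<in> carrier G" "b \<in> carrier G" "ca \<in> carrier G" "cb \<in> carrier G" using a b ab S_carrier by auto
  have "Z \<in> Sg" using S_pow[OF S_d[of n]] S_d[of n] Z_D by simp
  then have zS: "Z [^] (k::nat) \<in> Sg" for k using S_pow by blast
  have "(Z [^] l \<otimes> ca) \<otimes> a = Z [^] (l + j)" using a car by (simp add: m_assoc nat_pow_mult)
  moreover have "(Z [^] j \<otimes> cb) \<otimes> b = Z [^] (j + l)" using b car by (simp add: m_assoc nat_pow_mult)
  ultimately show ?thesis using zS a b by (metis add.commute S_mult)
qed

lemma frac_mult:
  assumes "a \<in> Sg" "b \<in> Sg" "c \<in> Sg" "f \<in> Sg"
  shows "\<exists>u\<in>Sg. \<exists>v\<in>Sg. inv a \<otimes> b \<otimes> (inv c \<otimes> f) = inv u \<otimes> v"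
proof -
  obtain u0 v0 where uv: "u0 \<in> Sg" "v0 \<in> Sg" "u0 \<otimes> b = v0 \<otimes> c" using ore assms by blast
  have car: "a \<in> carrier G" "b \<in> carrier G" "c \<in> carrier G" "f \<in> carrier G"
    "u0 \<in> carrier G" "v0 \<in> carrier G" using assms uv S_carrier by auto
  have bc: "b \<otimes> inv c = inv u0 \<otimes> v0"
  proof -
    have "inv u0 \<otimes> v0 = inv u0 \<otimes> (v0 \<otimes> c) \<otimes> inv c" using car by (simp add: m_assoc)
    also have "\<dots> = inv u0 \<otimes> (u0 \<otimes> b) \<otimes> inv c" using uv by simp
    also have "\<dots> = b \<otimes> inv c" using car by (simp add: m_assoc[symmetric])
    finally show ?thesis by simp
  qed
  have "inv a \<otimes> b \<otimes> (inv c \<otimes> f) = inv a \<otimes> (b \<otimes> inv c) \<otimes> f" using car by (simp add: m_assoc)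
  also have "\<dots> = (inv a \<otimes> inv u0) \<otimes> (v0 \<otimes> f)" using bc car by (simp add: m_assoc)
  also have "\<dots> = inv (u0 \<otimes> a) \<otimes> (v0 \<otimes> f)" using car by (simp add: inv_mult_group)
  finally have "inv a \<otimes> b \<otimes> (inv c \<otimes> f) = inv (u0 \<otimes> a) \<otimes> (v0 \<otimes> f)" .
  moreover have "u0 \<otimes> a \<in> Sg" "v0 \<otimes> f \<in> Sg" using uv assms by auto
  ultimately show ?thesis by blast
qed

lemma fractions: "g \<in> carrier G \<Longrightarrow> \<exists>a\<in>Sg. \<exists>b\<in>Sg. g = inv a \<otimes> b"
proof -
  assume "g \<in> carrier G"
  then obtain w where w: "w \<in> braid_words (Suc n)" "g = braid_class (Suc n) w"
    by (auto simp: carrier_G)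
  show ?thesis unfolding w(2)
  proof (rule class_induct[OF w(1)])
    show "\<exists>a\<in>Sg. \<exists>b\<in>Sg. \<one> = inv a \<otimes> b" by (rule bexI[of _ \<one>], rule bexI[of _ \<one>]) auto
  next
    fix i x assume h: "1 \<le> i" "i \<le> n" "x \<in> carrier G" "\<exists>a\<in>Sg. \<exists>b\<in>Sg. x = inv a \<otimes> b"
    obtain p where p: "i = Suc p" using h by (cases i) auto
    have dd: "d i = d p \<otimes> s i" using dSuc[of p] p h by simp
    have si: "s i = inv (d p) \<otimes> d i" using dd h p by (simp add: m_assoc[symmetric])
    have sp: "d p \<in> Sg" "d i \<in> Sg" using S_d h p by auto
    obtain a b where ab: "a \<in> Sg" "b \<in> Sg" "x = inv a \<otimes> b" using h by blast
    show "\<exists>a\<in>Sg. \<exists>b\<in>Sg. s i \<otimes> x = inv a \<otimes> b"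
      using frac_mult[OF sp(1) sp(2) ab(1) ab(2)] si ab by simp
  next
    fix i x assume h: "1 \<le> i" "i \<le> n" "x \<in> carrier G" "\<exists>a\<in>Sg. \<exists>b\<in>Sg. x = inv a \<otimes> b"
    obtain p where p: "i = Suc p" using h by (cases i) auto
    have dd: "d i = d p \<otimes> s i" using dSuc[of p] p h by simp
    have si: "inv (s i) = inv (d i) \<otimes> d p" using dd h p by (simp add: m_assoc inv_mult_group)
    have sp: "d p \<in> Sg" "d i \<in> Sg" using S_d h p by auto
    obtain a b where ab: "a \<in> Sg" "b \<in> Sg" "x = inv a \<otimes> b" using h by blast
    show "\<exists>a\<in>Sg. \<exists>b\<in>Sg. inv (s i) \<otimes> x = inv a \<otimes> b"
      using frac_mult[OF sp(2) sp(1) ab(1) ab(2)] si ab by simp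
  qed
qed

end

theorem proposition5p5:
  fixes n :: nat
  assumes "n \<ge> 1"
  shows "ore_monoid (Sigma_monoid n)
    \<and> group_of_fractions_via (Sigma_monoid n) (braid_group (Suc n)) id"
proof -
  interpret braidn "braid_group (Suc n)" n
    by (rule braidn.intro[OF braid_group braidn_axioms.intro[OF HOL.refl assms]])
  have SM: "Sigma_monoid n = (braid_group (Suc n))\<lparr>carrier := Sg\<rparr>"
    by (simp add: Sigma_monoid_def Sg_def)
  have mon: "monoid (Sigma_monoid n)"
    unfolding SM by (rule submonoid.submonoid_is_monoid[OF gen_sub]) (rule monoid_axioms)
  have ore_m: "ore_monoid (Sigma_monoid n)"
    unfolding ore_monoid_def using mon ore S_carrier
    by (auto simp: SM)
  have gf: "group_of_fractions_via (Sigma_monoid n) (braid_group (Suc n)) id"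
    unfolding group_of_fractions_via_def using mon fractions S_carrier assms
    by (auto simp: SM hom_def is_group assms[unfolded One_nat_def])
  show ?thesis using ore_m gf by simp
qed

end
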